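(* For every integer $d\ge 1$, the $d$-dimensional hypercube $Q_d$ satisfies $\sigma_T(Q_d)=2d-1$.
   Context: $Q_d=K_2\times\cdots\times K_2$ ($d$ factors) is the graph whose vertices are the 0-1 vectors of length $d$, two vertices adjacent iff they differ in exactly one coordinate. For a spanning tree $T$ of a connected graph $G$, $d_T(u,v)$ is the distance between $u$ and $v$ in $T$, $\sigma_T(G,T):=\max_{uv\in E(G)} d_T(u,v)$, and the tree-stretch is $\sigma_T(G):=\min\{\sigma_T(G,T): T \text{ a spanning tree of } G\}$. *)

theory Defs
  imports Main
begin

definition is_walk :: "'a set set \<Rightarrow> 'a list \<Rightarrow> bool" where
  "is_walk E xs \<longleftrightarrow> xs \<noteq> [] \<and> (\<forall>i. Suc i < length xs \<longrightarrow> {xs ! i, xs ! Suc i} \<in> E)"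

definition graph_connected :: "'a set \<Rightarrow> 'a set set \<Rightarrow> bool" where
  "graph_connected V E \<longleftrightarrow>
     (\<forall>u\<in>V. \<forall>v\<in>V. \<exists>xs. is_walk E xs \<and> hd xs = u \<and> last xs = v)"

definition is_cycle :: "'a set set \<Rightarrow> 'a list \<Rightarrow> bool" where
  "is_cycle E xs \<longleftrightarrow> length xs \<ge> 3 \<and> distinct xs \<and> is_walk E xs \<and> {last xs, hd xs} \<in> E"

definition acyclic_graph :: "'a set set \<Rightarrow> bool" where
  "acyclic_graph E \<longleftrightarrow> (\<nexists>xs. is_cycle E xs)"

definition spanning_tree :: "'a set \<Rightarrow> 'a set set \<Rightarrow> 'a set set \<Rightarrow> bool" where
  "spanning_tree V E T \<longleftrightarrow> T \<subseteq> E \<and> graph_connected V T \<and> acyclic_graph T"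

definition gdist :: "'a set set \<Rightarrow> 'a \<Rightarrow> 'a \<Rightarrow> nat" where
  "gdist E u v = (LEAST n. \<exists>xs. is_walk E xs \<and> hd xs = u \<and> last xs = v \<and> length xs = Suc n)"

definition stretch :: "'a set set \<Rightarrow> 'a set set \<Rightarrow> nat" where
  "stretch E T = Max {gdist T u v | u v. {u, v} \<in> E}"

definition tree_stretch :: "'a set \<Rightarrow> 'a set set \<Rightarrow> nat" where
  "tree_stretch V E = Min {stretch E T | T. spanning_tree V E T}"

text \<open>The hypercube Q_d: 0-1 vectors of length d (as boolean lists), adjacent iff
  they differ in exactly one coordinate.\<close>
definition hypercube_verts :: "nat \<Rightarrow> bool list set" where
  "hypercube_verts d = {xs. length xs = d}"

definition hypercube_edges :: "nat \<Rightarrow> bool list set set" where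
  "hypercube_edges d = {{x, y} | x y. x \<in> hypercube_verts d \<and> y \<in> hypercube_verts d \<and>
       card {i. i < d \<and> x ! i \<noteq> y ! i} = 1}"

end

theory Submission
  imports Defs
begin

fun wk :: "'a set set \<Rightarrow> 'a list \<Rightarrow> bool" where
  "wk E [] = False" | "wk E [x] = True" | "wk E (x#y#xs) = ({x,y}\<in>E \<and> wk E (y#xs))"

lemma is_walk_Nil: "\<not> is_walk E []" by (simp add: is_walk_def)
lemma is_walk_single: "is_walk E [x]" by (simp add: is_walk_def)
lemma is_walk_Cons2: "is_walk E (x#y#xs) \<longleftrightarrow> {x,y}\<in>E \<and> is_walk E (y#xs)"
proof
  assume h: "is_walk E (x#y#xs)"
  then have "{x,y}\<in>E" unfolding is_walk_def by force
  moreover have "is_walk E (y#xs)" unfolding is_walk_def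
  proof (intro conjI allI impI)
    fix i assume "Suc i < length (y#xs)"
    then have "Suc (Suc i) < length (x#y#xs)" by simp
    then have "{(x#y#xs) ! Suc i, (x#y#xs) ! Suc (Suc i)} \<in> E" using h unfolding is_walk_def by blast
    then show "{(y#xs) ! i, (y#xs) ! Suc i} \<in> E" by simp
  qed simp
  ultimately show "{x,y}\<in>E \<and> is_walk E (y#xs)" by blast
next
  assume h: "{x,y}\<in>E \<and> is_walk E (y#xs)"
  show "is_walk E (x#y#xs)" unfolding is_walk_def
  proof (intro conjI allI impI)
    fix i assume i: "Suc i < length (x#y#xs)"
    show "{(x#y#xs) ! i, (x#y#xs) ! Suc i} \<in> E"
    proof (cases i)
      case 0 then show ?thesis using h by simp
    next
      case (Suc j) then show ?thesis using h i unfolding is_walk_def by simp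
    qed
  qed simp
qed

lemma is_walk_wk: "is_walk E xs \<longleftrightarrow> wk E xs"
  by (induction E xs rule: wk.induct) (auto simp: is_walk_Nil is_walk_single is_walk_Cons2)

lemma wk_ne: "wk E w \<Longrightarrow> w \<noteq> []" by auto

lemma wk_mono: "wk E w \<Longrightarrow> E \<subseteq> F \<Longrightarrow> wk F w"
  by (induction E w rule: wk.induct) auto

lemma wk_Cons: "wk E (x#w) \<longleftrightarrow> (w = [] \<or> ({x, hd w} \<in> E \<and> wk E w))"
  by (cases w) auto

lemma wk_append: "wk E xs \<Longrightarrow> wk E ys \<Longrightarrow> {last xs, hd ys} \<in> E \<Longrightarrow> wk E (xs @ ys)"
  by (induction E xs rule: wk.induct) (auto simp: wk_Cons)

lemma wk_suffix: "wk E (xs @ ys) \<Longrightarrow> ys \<noteq> [] \<Longrightarrow> wk E ys"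
  by (induction xs) (auto simp: wk_Cons)

lemma wk_prefix: "wk E (xs @ ys) \<Longrightarrow> xs \<noteq> [] \<Longrightarrow> wk E xs"
  by (induction xs) (auto simp: wk_Cons)

lemma wk_rev: "wk E xs \<Longrightarrow> wk E (rev xs)"
proof (induction E xs rule: wk.induct)
  case (3 E x y xs)
  then have "wk E (rev (y#xs))" "{y,x} \<in> E" by (auto simp: insert_commute)
  then have "wk E (rev (y#xs) @ [x])" by (intro wk_append) auto
  then show ?case by simp
qed auto

lemma wk_join: "wk E xs \<Longrightarrow> wk E ys \<Longrightarrow> last xs = hd ys \<Longrightarrow> wk E (xs @ tl ys)"
proof -
  assume a: "wk E xs" "wk E ys" "last xs = hd ys"
  show ?thesis
  proof (cases "tl ys")
    case Nil then show ?thesis using a by simp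
  next
    case (Cons z zs)
    then have "ys = hd ys # z # zs" using a(2) by (cases ys) auto
    then have "{hd ys, z} \<in> E" "wk E (z#zs)" using a(2) by (metis wk.simps(3))+
    then show ?thesis using a Cons by (auto intro!: wk_append)
  qed
qed

lemma wk_to: "wk E w \<Longrightarrow> y \<in> set w \<Longrightarrow> \<exists>w'. wk E w' \<and> hd w' = hd w \<and> last w' = y"
proof (induction E w rule: wk.induct)
  case (3 E x z xs)
  show ?case
  proof (cases "y = x")
    case True then show ?thesis by (intro exI[of _ "[x]"]) auto
  next
    case False
    then obtain w' where "wk E w'" "hd w' = z" "last w' = y" using 3 by auto
    then show ?thesis using 3 by (intro exI[of _ "x#w'"]) (auto simp: wk_Cons)
  qed
next
  case (2 E x) then show ?case by (intro exI[of _ "[x]"]) auto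
qed auto

lemma wk_distinct: "wk E w \<Longrightarrow> \<exists>p. wk E p \<and> distinct p \<and> hd p = hd w \<and> last p = last w"
proof (induction E w rule: wk.induct)
  case (2 E x) then show ?case by (intro exI[of _ "[x]"]) auto
next
  case (3 E x y xs)
  then obtain p where p: "wk E p" "distinct p" "hd p = y" "last p = last (y#xs)" by auto
  show ?case
  proof (cases "x \<in> set p")
    case True
    then obtain p1 p2 where sp: "p = p1 @ x # p2" by (meson split_list)
    show ?thesis using p sp by (intro exI[of _ "x#p2"]) (auto intro: wk_suffix)
  next
    case False
    have "p \<noteq> []" using p by auto
    then show ?thesis using p False 3 by (intro exI[of _ "x#p"]) (auto simp: wk_Cons)
  qed
qed auto

lemma wk_avoid: "wk E w \<Longrightarrow> z \<notin> set w \<Longrightarrow> z \<in> e \<Longrightarrow> wk (E - {e}) w"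
  by (induction E w rule: wk.induct) auto

fun hm :: "bool list \<Rightarrow> bool list \<Rightarrow> nat" where
  "hm (a#x) (b#y) = (if a = b then 0 else 1) + hm x y" | "hm _ _ = 0"

lemma card_hm: "length x = length y \<Longrightarrow> card {i. i < length x \<and> x!i \<noteq> y!i} = hm x y"
proof (induction x y rule: list_induct2)
  case Nil then show ?case by simp
next
  case (Cons a x b y)
  have eq: "{i. i < length (a#x) \<and> (a#x)!i \<noteq> (b#y)!i} = (if a \<noteq> b then {0} else {}) \<union> Suc ` {i. i < length x \<and> x!i \<noteq> y!i}"
  proof (rule set_eqI)
    fix i show "i \<in> {i. i < length (a#x) \<and> (a#x)!i \<noteq> (b#y)!i} \<longleftrightarrow> i \<in> (if a \<noteq> b then {0} else {}) \<union> Suc ` {i. i < length x \<and> x!i \<noteq> y!i}"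
      by (cases i) (auto simp: image_iff)
  qed
  have "card ((if a \<noteq> b then {0} else {}) \<union> Suc ` {i. i < length x \<and> x!i \<noteq> y!i}) = (if a = b then 0 else 1) + card (Suc ` {i. i < length x \<and> x!i \<noteq> y!i})"
    by (subst card_Un_disjoint) auto
  also have "card (Suc ` {i. i < length x \<and> x!i \<noteq> y!i}) = hm x y" using Cons by (simp add: card_image)
  finally show ?case using eq by simp
qed

lemma hm_sym: "hm x y = hm y x"
  by (induction x y rule: hm.induct) auto

lemma hm_self: "hm x x = 0"
  by (induction x) auto

lemma hm_le: "hm x y \<le> length x"
  by (induction x y rule: hm.induct) auto

lemma hm_tri: "length x = length y \<Longrightarrow> hm x z \<le> hm x y + hm y z"
proof (induction x y arbitrary: z rule: list_induct2)
  case (Cons a x b y)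
  have "hm x (tl z) \<le> hm x y + hm y (tl z)" by (rule Cons.IH)
  then show ?case by (cases z) auto
qed simp

definition comp :: "bool list \<Rightarrow> bool list" where "comp x = map Not x"

lemma length_comp[simp]: "length (comp x) = length x" by (simp add: comp_def)

lemma hm_comp: "length x = length y \<Longrightarrow> hm (comp x) y = length x - hm x y"
proof (induction x y rule: list_induct2)
  case (Cons a x b y)
  have "hm x y \<le> length x" by (rule hm_le)
  then show ?case using Cons by (auto simp: comp_def)
qed (simp add: comp_def)

lemma hm_comp_self: "hm (comp x) x = length x"
  using hm_comp[of x x] by (simp add: hm_self)

lemma hm_comp2: "hm (comp x) (comp y) = hm x y"
  by (induction x y rule: hm.induct) (auto simp: comp_def)

lemma hm_zero: "length x = length y \<Longrightarrow> hm x y = 0 \<Longrightarrow> x = y"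
  by (induction x y rule: list_induct2) (auto split: if_splits)

lemma edge_iff: "{x,y} \<in> hypercube_edges d \<longleftrightarrow> length x = d \<and> length y = d \<and> hm x y = 1"
proof
  assume "{x,y} \<in> hypercube_edges d"
  then obtain x' y' where e: "{x,y} = {x',y'}" "length x' = d" "length y' = d"
     "card {i. i < d \<and> x' ! i \<noteq> y' ! i} = 1"
    unfolding hypercube_edges_def hypercube_verts_def by auto
  then have "hm x' y' = 1" using card_hm[of x' y'] by simp
  then show "length x = d \<and> length y = d \<and> hm x y = 1" using e(1,2,3)
    by (auto simp: doubleton_eq_iff hm_sym)
next
  assume a: "length x = d \<and> length y = d \<and> hm x y = 1"
  then have "card {i. i < d \<and> x ! i \<noteq> y ! i} = 1" using card_hm[of x y] by simp
  then show "{x,y} \<in> hypercube_edges d" using a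
    unfolding hypercube_edges_def hypercube_verts_def by (intro CollectI exI[of _ x] exI[of _ y]) simp
qed

lemma edge_neq: "{x,y} \<in> hypercube_edges d \<Longrightarrow> x \<noteq> y"
proof
  assume "{x,y} \<in> hypercube_edges d" "x = y"
  then show False using edge_iff[of x y d] hm_self[of x] by simp
qed

lemma wk_hyp: "wk F w \<Longrightarrow> F \<subseteq> hypercube_edges d \<Longrightarrow> length (hd w) = d \<Longrightarrow>
   (\<forall>v\<in>set w. length v = d) \<and> hm (hd w) (last w) \<le> length w - 1"
proof (induction F w rule: wk.induct)
  case (2 F x) then show ?case by (simp add: hm_self)
next
  case (3 F x y xs)
  then have e: "length x = d" "length y = d" "hm x y = 1" using edge_iff[of x y d] by auto
  then have ih: "(\<forall>v\<in>set (y#xs). length v = d) \<and> hm y (last (y#xs)) \<le> length (y#xs) - 1"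
    using 3 by auto
  have "hm x (last (y#xs)) \<le> hm x y + hm y (last (y#xs))" using e by (intro hm_tri) auto
  then show ?case using ih e by auto
qed auto

definition R :: "'a set set \<Rightarrow> 'a \<Rightarrow> 'a \<Rightarrow> 'a set" where
  "R T a b = {x. \<exists>w. wk (T - {{a,b}}) w \<and> hd w = b \<and> last w = x}"

lemma R_self: "b \<in> R T a b"
  unfolding R_def by (intro CollectI exI[of _ "[b]"]) simp

lemma R_step: "x \<in> R T a b \<Longrightarrow> {x,y} \<in> T \<Longrightarrow> {x,y} \<noteq> {a,b} \<Longrightarrow> y \<in> R T a b"
proof -
  assume "x \<in> R T a b" and e: "{x,y} \<in> T" "{x,y} \<noteq> {a,b}"
  then obtain w where w: "wk (T - {{a,b}}) w" "hd w = b" "last w = x" unfolding R_def by auto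
  then have "wk (T - {{a,b}}) (w @ [y])" using e by (intro wk_append) auto
  moreover have "hd (w @ [y]) = b" using w by (cases w) auto
  ultimately show ?thesis unfolding R_def by (intro CollectI exI[of _ "w @ [y]"]) simp
qed

lemma tree_sep: "acyclic_graph T \<Longrightarrow> {a,b} \<in> T \<Longrightarrow> a \<noteq> b \<Longrightarrow> a \<notin> R T a b"
proof
  assume ac: "acyclic_graph T" and e: "{a,b} \<in> T" "a \<noteq> b" and "a \<in> R T a b"
  then obtain w where w: "wk (T - {{a,b}}) w" "hd w = b" "last w = a" unfolding R_def by auto
  then obtain p where p: "wk (T - {{a,b}}) p" "distinct p" "hd p = b" "last p = a"
    using wk_distinct by metis
  obtain q where pq: "p = b # q" using p by (cases p) auto
  obtain y q' where q: "q = y # q'" using p pq e by (cases q) auto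
  have "q' \<noteq> []"
  proof
    assume "q' = []"
    then have "p = [b,a]" using pq q p by simp
    then show False using p(1) by (simp add: insert_commute)
  qed
  then have "length p \<ge> 3" using pq q by (cases q') auto
  moreover have "is_walk T p" using p(1) by (simp add: is_walk_wk wk_mono[of _ p T])
  moreover have "{last p, hd p} \<in> T" using p e by simp
  ultimately have "is_cycle T p" using p(2) unfolding is_cycle_def by simp
  then show False using ac unfolding acyclic_graph_def by blast
qed

lemma cross: "acyclic_graph T \<Longrightarrow> {a,b} \<in> T \<Longrightarrow> a \<noteq> b \<Longrightarrow> wk T w \<Longrightarrow> hd w \<notin> R T a b \<Longrightarrow> last w \<in> R T a b \<Longrightarrow>
  \<exists>w1 w2. w = w1 @ w2 \<and> wk T w1 \<and> wk T w2 \<and> hd w1 = hd w \<and> last w1 = a \<and> hd w2 = b \<and> last w2 = last w"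
proof (induction w)
  case Nil then show ?case by simp
next
  case (Cons x rest)
  note ac = Cons.prems(1) and eab = Cons.prems(2) and neq = Cons.prems(3)
    and wxr = Cons.prems(4) and hx = Cons.prems(5) and lx = Cons.prems(6)
  have rne: "rest \<noteq> []"
  proof
    assume "rest = []" then show False using hx lx by simp
  qed
  then obtain y zs where rz: "rest = y # zs" by (cases rest) auto
  have xy: "{x,y} \<in> T" and wr: "wk T rest" using wxr rz by auto
  have hx': "x \<notin> R T a b" using hx by simp
  have lr: "last rest \<in> R T a b" using lx rne by simp
  show ?case
  proof (cases "y \<in> R T a b")
    case False
    have h1: "hd rest \<notin> R T a b" using False rz by simp
    from Cons.IH[OF ac eab neq wr h1 lr]
    obtain w1 w2 where ww: "rest = w1 @ w2" "wk T w1" "wk T w2" "hd w1 = hd rest" "last w1 = a" "hd w2 = b" "last w2 = last rest"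
      by blast
    have w1ne: "w1 \<noteq> []" using wk_ne[OF ww(2)] .
    have "hd w1 = y" using ww(4) rz by simp
    then have wx: "wk T (x # w1)" using ww(2) xy w1ne by (simp add: wk_Cons)
    have "last (x # rest) = last w2" using ww(7) rne by simp
    moreover have "x # rest = (x#w1) @ w2" using ww(1) by simp
    moreover have "hd (x#w1) = hd (x#rest)" "last (x#w1) = a" using ww(5) w1ne by auto
    ultimately show ?thesis using ww(3,6) wx
      by (intro exI[of _ "x#w1"] exI[of _ w2] conjI) simp_all
  next
    case True
    have "{x,y} = {a,b}"
    proof (rule ccontr)
      assume "{x,y} \<noteq> {a,b}"
      then have c1: "{y,x} \<noteq> {a,b}" by (simp add: insert_commute)
      have c2: "{y,x} \<in> T" using xy by (simp add: insert_commute)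
      have "x \<in> R T a b" by (rule R_step[OF True c2 c1])
      then show False using hx' by simp
    qed
    moreover have "y \<noteq> a" using True tree_sep[OF ac eab neq] by auto
    ultimately have xa: "x = a" and yb: "y = b" by (auto simp: doubleton_eq_iff)
    have "x # rest = [x] @ rest" by simp
    moreover have "hd rest = b" "last rest = last (x#rest)" using rz yb rne by auto
    ultimately show ?thesis using wr xa
      by (intro exI[of _ "[x]"] exI[of _ rest] conjI) simp_all
  qed
qed

lemma first_edge: "wk F p \<Longrightarrow> distinct p \<Longrightarrow> hd p = b \<Longrightarrow> last p = z \<Longrightarrow> z \<noteq> b \<Longrightarrow> F \<subseteq> T \<Longrightarrow>
   \<exists>c. {b,c} \<in> F \<and> z \<in> R T b c"
proof -
  assume p: "wk F p" "distinct p" "hd p = b" "last p = z" "z \<noteq> b" "F \<subseteq> T"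
  obtain q where pq: "p = b # q" using p by (cases p) auto
  obtain c q' where q: "q = c # q'" using p pq by (cases q) auto
  have "{b,c} \<in> F" "wk F (c#q')" using p(1) pq q by auto
  then have "wk T (c#q')" using p(6) wk_mono by blast
  moreover have "b \<notin> set (c#q')" using p(2) pq q by auto
  ultimately have "wk (T - {{b,c}}) (c#q')" by (intro wk_avoid[of _ _ b]) auto
  moreover have "last (c#q') = z" using p pq q by simp
  ultimately have "wk (T - {{b,c}}) (c#q') \<and> hd (c#q') = c \<and> last (c#q') = z" by simp
  then have "z \<in> R T b c" unfolding R_def by blast
  then show ?thesis using \<open>{b,c} \<in> F\<close> by blast
qed

lemma wk_last_in: "wk E w \<Longrightarrow> last w \<noteq> hd w \<Longrightarrow> last w \<in> \<Union>E"
proof (induction E w rule: wk.induct)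
  case (3 E x y xs)
  show ?case
  proof (cases "last (y#xs) = y")
    case True then show ?thesis using 3 by auto
  next
    case False then show ?thesis using 3 by auto
  qed
qed auto

lemma R_in: "y \<in> R T a b \<Longrightarrow> y \<noteq> b \<Longrightarrow> y \<in> \<Union>T"
proof -
  assume "y \<in> R T a b" "y \<noteq> b"
  then obtain w where w: "wk (T - {{a,b}}) w" "hd w = b" "last w = y" unfolding R_def by auto
  then have "last w \<in> \<Union>(T - {{a,b}})" using \<open>y \<noteq> b\<close> by (intro wk_last_in) auto
  then show ?thesis using w by auto
qed

lemma R_sub: "acyclic_graph T \<Longrightarrow> {a,b}\<in>T \<Longrightarrow> {b,c}\<in>T \<Longrightarrow> a\<noteq>b \<Longrightarrow> b\<noteq>c \<Longrightarrow> {b,c} \<noteq> {a,b} \<Longrightarrow>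
   R T b c \<subseteq> R T a b \<and> b \<notin> R T b c"
proof -
  assume ac: "acyclic_graph T" and e: "{a,b}\<in>T" "{b,c}\<in>T" "a\<noteq>b" "b\<noteq>c" "{b,c} \<noteq> {a,b}"
  have nb: "b \<notin> R T b c" using tree_sep[OF ac e(2) e(4)] .
  have na: "a \<notin> R T b c"
  proof
    assume "a \<in> R T b c"
    moreover have "{a,b} \<noteq> {b,c}" using e(5) by metis
    ultimately have "b \<in> R T b c" using e(1) by (metis R_step)
    then show False using nb by simp
  qed
  have "R T b c \<subseteq> R T a b"
  proof
    fix x assume "x \<in> R T b c"
    then obtain w where w: "wk (T - {{b,c}}) w" "hd w = c" "last w = x" unfolding R_def by auto
    have sub: "set w \<subseteq> R T b c"
    proof
      fix v assume "v \<in> set w"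
      then obtain w' where "wk (T - {{b,c}}) w'" "hd w' = hd w" "last w' = v" using wk_to[OF w(1)] by blast
      then show "v \<in> R T b c" using w unfolding R_def by (intro CollectI exI[of _ w']) simp
    qed
    then have "a \<notin> set w" using na by auto
    then have "wk ((T - {{b,c}}) - {{a,b}}) w" using wk_avoid[OF w(1) \<open>a \<notin> set w\<close>, of "{a,b}"] by simp
    then have w2: "wk (T - {{a,b}}) w" by (rule wk_mono) auto
    have "w \<noteq> []" using w by auto
    then have "wk (T - {{a,b}}) (b # w)" using w2 w e by (simp add: wk_Cons)
    moreover have "last (b#w) = x" using w \<open>w \<noteq> []\<close> by simp
    ultimately show "x \<in> R T a b" unfolding R_def by (intro CollectI exI[of _ "b#w"]) simp
  qed
  then show ?thesis using nb by simp
qed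

lemma finite_V: "finite (hypercube_verts d)"
  unfolding hypercube_verts_def using finite_lists_length_eq[of "UNIV :: bool set" d] by simp

lemma gdist_ge:
  assumes "\<exists>w. wk T w \<and> hd w = u \<and> last w = v"
    and "\<And>w. wk T w \<Longrightarrow> hd w = u \<Longrightarrow> last w = v \<Longrightarrow> Suc k \<le> length w"
  shows "k \<le> gdist T u v"
proof -
  obtain w where w: "wk T w" "hd w = u" "last w = v" using assms(1) by blast
  have ex: "\<exists>n. \<exists>xs. is_walk T xs \<and> hd xs = u \<and> last xs = v \<and> length xs = Suc n"
    using w wk_ne[OF w(1)] by (intro exI[of _ "length w - 1"] exI[of _ w]) (auto simp: is_walk_wk)
  show ?thesis unfolding gdist_def
  proof (rule LeastI2_ex[OF ex])
    fix n assume "\<exists>xs. is_walk T xs \<and> hd xs = u \<and> last xs = v \<and> length xs = Suc n"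
    then obtain xs where xs: "is_walk T xs" "hd xs = u" "last xs = v" "length xs = Suc n" by blast
    then have "Suc k \<le> length xs" using assms(2)[of xs] by (simp add: is_walk_wk)
    then show "k \<le> n" using xs(4) by simp
  qed
qed

lemma gdist_le:
  assumes "wk T w" "hd w = u" "last w = v"
  shows "gdist T u v \<le> length w - 1"
  unfolding gdist_def
  using assms wk_ne[OF assms(1)] by (intro Least_le exI[of _ w]) (auto simp: is_walk_wk)

lemma conn_wk: "graph_connected V T \<Longrightarrow> u \<in> V \<Longrightarrow> v \<in> V \<Longrightarrow> \<exists>w. wk T w \<and> hd w = u \<and> last w = v"
  unfolding graph_connected_def by (auto simp: is_walk_wk)

lemma key_edge:
  assumes st: "spanning_tree (hypercube_verts d) (hypercube_edges d) T" and d: "d \<ge> 1"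
  shows "\<exists>a b. {a,b} \<in> T \<and> \<not> (comp a \<in> R T a b \<longleftrightarrow> comp b \<in> R T a b)"
proof (rule ccontr)
  let ?V = "hypercube_verts d" and ?E = "hypercube_edges d"
  assume "\<not> ?thesis"
  then have H: "\<And>a b. {a,b} \<in> T \<Longrightarrow> (comp a \<in> R T a b \<longleftrightarrow> comp b \<in> R T a b)" by blast
  have TE: "T \<subseteq> ?E" and conn: "graph_connected ?V T" and ac: "acyclic_graph T"
    using st unfolding spanning_tree_def by auto
  have RV: "R T a b \<subseteq> ?V" if "{a,b} \<in> T" for a b
  proof
    fix y assume y: "y \<in> R T a b"
    show "y \<in> ?V"
    proof (cases "y = b")
      case True then show ?thesis using that TE edge_iff[of a b d] by (auto simp: hypercube_verts_def)
    next
      case False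
      then obtain e where "e \<in> T" "y \<in> e" using R_in[OF y] by blast
      then obtain p q where "e = {p,q}" "length p = d" "length q = d" using TE
        unfolding hypercube_edges_def hypercube_verts_def by blast
      then show ?thesis using \<open>y \<in> e\<close> by (auto simp: hypercube_verts_def)
    qed
  qed
  have cneq: "comp x \<noteq> x" if "length x = d" for x
    using hm_comp_self[of x] hm_self[of x] that d by force
  define G where "G = {(a,b). {a,b} \<in> T \<and> comp b \<in> R T a b}"
  define x0 where "x0 = replicate d False"
  have x0V: "x0 \<in> ?V" "comp x0 \<in> ?V" by (auto simp: x0_def hypercube_verts_def)
  obtain w where "wk T w" "hd w = x0" "last w = comp x0" using conn_wk[OF conn x0V] by blast
  then obtain p where "wk T p" "distinct p" "hd p = x0" "last p = comp x0" using wk_distinct by metis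
  moreover have "comp x0 \<noteq> x0" using cneq x0V by (auto simp: hypercube_verts_def)
  ultimately obtain c where c: "{x0,c} \<in> T" "comp x0 \<in> R T x0 c" using first_edge[of T p x0 "comp x0" T] by blast
  then have "(x0,c) \<in> G" using H[OF c(1)] unfolding G_def by auto
  then obtain ab where ab: "ab \<in> G" and mn: "\<And>y. y \<in> G \<Longrightarrow> card (R T (fst ab) (snd ab)) \<le> card (R T (fst y) (snd y))"
    using ex_has_least_nat[of "\<lambda>x. x \<in> G" "(x0,c)" "\<lambda>y. card (R T (fst y) (snd y))"] by blast
  obtain a b where abd: "ab = (a,b)" by (cases ab)
  have eab: "{a,b} \<in> T" and cb: "comp b \<in> R T a b" using ab abd unfolding G_def by auto
  have aneqb: "a \<noteq> b" using eab TE edge_neq by blast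
  have lb: "length b = d" using eab TE edge_iff[of a b d] by auto
  obtain w where w: "wk (T - {{a,b}}) w" "hd w = b" "last w = comp b" using cb unfolding R_def by auto
  then obtain p where "wk (T - {{a,b}}) p" "distinct p" "hd p = b" "last p = comp b" using wk_distinct by metis
  then obtain c where c: "{b,c} \<in> T - {{a,b}}" "comp b \<in> R T b c"
    using first_edge[of "T - {{a,b}}" p b "comp b" T] cneq[OF lb] by blast
  have ebc: "{b,c} \<in> T" using c by simp
  have "(b,c) \<in> G" using H[OF ebc] c unfolding G_def by auto
  then have le: "card (R T a b) \<le> card (R T b c)" using mn abd by fastforce
  have bneqc: "b \<noteq> c" using ebc TE edge_neq by blast
  have "R T b c \<subseteq> R T a b \<and> b \<notin> R T b c"
    using R_sub[OF ac eab ebc aneqb bneqc] c by auto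
  then have "R T b c \<subset> R T a b" using R_self[of b T a] by blast
  moreover have "finite (R T a b)" using RV[OF eab] finite_V finite_subset by blast
  ultimately have "card (R T b c) < card (R T a b)" by (rule psubset_card_mono[rotated])
  then show False using le by simp
qed

lemma stretch_fin:
  "finite {gdist T u v | u v. {u,v} \<in> hypercube_edges d}"
proof -
  have "{gdist T u v | u v. {u,v} \<in> hypercube_edges d} \<subseteq> (\<lambda>(u,v). gdist T u v) ` (hypercube_verts d \<times> hypercube_verts d)"
    by (auto simp: edge_iff hypercube_verts_def)
  moreover have "finite ((\<lambda>(u,v). gdist T u v) ` (hypercube_verts d \<times> hypercube_verts d))"
    using finite_V by blast
  ultimately show ?thesis by (rule finite_subset)
qed

lemma lower:
  assumes st: "spanning_tree (hypercube_verts d) (hypercube_edges d) T" and d: "d \<ge> 1"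
  shows "2*d - 1 \<le> stretch (hypercube_edges d) T"
proof -
  let ?V = "hypercube_verts d" and ?E = "hypercube_edges d"
  have TE: "T \<subseteq> ?E" and conn: "graph_connected ?V T" and ac: "acyclic_graph T"
    using st unfolding spanning_tree_def by auto
  obtain a b where eab: "{a,b} \<in> T" and nc: "\<not> (comp a \<in> R T a b \<longleftrightarrow> comp b \<in> R T a b)"
    using key_edge[OF st d] by blast
  have "{a,b} \<in> ?E" using eab TE by blast
  then have la: "length a = d" and lb: "length b = d" and hab: "hm a b = 1" using edge_iff by auto
  have aneqb: "a \<noteq> b" using \<open>{a,b} \<in> ?E\<close> edge_neq by blast
  have ecomp: "{comp a, comp b} \<in> ?E" using la lb hab by (simp add: edge_iff hm_comp2)
  have bound: "hm u a + hm b v + 1 \<le> gdist T u v"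
    if u: "u \<notin> R T a b" "length u = d" and v: "v \<in> R T a b" "length v = d" for u v
  proof (rule gdist_ge)
    show "\<exists>w. wk T w \<and> hd w = u \<and> last w = v" using conn_wk[OF conn] u v by (simp add: hypercube_verts_def)
  next
    fix w assume w: "wk T w" "hd w = u" "last w = v"
    from cross[OF ac eab aneqb w(1)] w u v
    obtain w1 w2 where ww: "w = w1 @ w2" "wk T w1" "wk T w2" "hd w1 = u" "last w1 = a" "hd w2 = b" "last w2 = v"
      by auto
    have "hm u a \<le> length w1 - 1" using wk_hyp[OF ww(2) TE] ww u by simp
    moreover have "hm b v \<le> length w2 - 1" using wk_hyp[OF ww(3) TE] ww lb by simp
    moreover have "w1 \<noteq> []" "w2 \<noteq> []" using ww wk_ne by auto
    ultimately show "Suc (hm u a + hm b v + 1) \<le> length w" using ww(1) by (cases w1; cases w2) auto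
  qed
  have "\<exists>u v. {u,v} \<in> ?E \<and> 2*d - 1 \<le> gdist T u v"
  proof (cases "comp b \<in> R T a b")
    case True
    then have ca: "comp a \<notin> R T a b" using nc by blast
    have "hm (comp a) a + hm b (comp b) + 1 \<le> gdist T (comp a) (comp b)"
      using bound[OF ca _ True] la lb by simp
    moreover have "hm (comp a) a = d" "hm b (comp b) = d" using la lb hm_comp_self hm_sym by metis+
    ultimately show ?thesis using ecomp by (intro exI[of _ "comp a"] exI[of _ "comp b"]) simp
  next
    case False
    then have ca: "comp a \<in> R T a b" using nc by blast
    have "hm (comp b) a + hm b (comp a) + 1 \<le> gdist T (comp b) (comp a)"
      using bound[OF False _ ca] la lb by simp
    moreover have "hm (comp b) a = d - 1" using hm_comp[of b a] la lb hab hm_sym by metis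
    moreover have "hm b (comp a) = d - 1" using hm_comp[of a b] la lb hab hm_sym by metis
    moreover have "{comp b, comp a} \<in> ?E" using ecomp by (simp add: insert_commute)
    ultimately show ?thesis using d by (intro exI[of _ "comp b"] exI[of _ "comp a"]) simp
  qed
  then obtain u v where uv: "{u,v} \<in> ?E" "2*d - 1 \<le> gdist T u v" by blast
  have "gdist T u v \<le> stretch ?E T" unfolding stretch_def
    using uv(1) by (intro Max_ge[OF stretch_fin]) blast
  then show ?thesis using uv(2) by simp
qed

fun par :: "bool list \<Rightarrow> bool list" where
  "par [] = []" | "par (True#xs) = False#xs" | "par (False#xs) = False # par xs"

definition wt :: "bool list \<Rightarrow> nat" where "wt x = length (filter id x)"

definition T0 :: "nat \<Rightarrow> bool list set set" where
  "T0 d = {{x, par x} | x. length x = d \<and> True \<in> set x}"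

lemma par_len: "length (par x) = length x"
  by (induction x rule: par.induct) auto

lemma par_wt: "True \<in> set x \<Longrightarrow> Suc (wt (par x)) = wt x"
  unfolding wt_def by (induction x rule: par.induct) auto

lemma par_hm: "True \<in> set x \<Longrightarrow> hm x (par x) = 1"
  by (induction x rule: par.induct) (auto simp: hm_self)

lemma wt_zero: "True \<notin> set x \<Longrightarrow> wt x = 0"
  unfolding wt_def by (induction x) auto

lemma wt_le: "wt x \<le> length x"
  unfolding wt_def by simp

lemma no_true: "True \<notin> set x \<Longrightarrow> x = replicate (length x) False"
  by (induction x) auto

lemma T0_edge: "{y,z} \<in> T0 d \<Longrightarrow> (z = par y \<and> True \<in> set y) \<or> (y = par z \<and> True \<in> set z)"
  unfolding T0_def by (auto simp: doubleton_eq_iff)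

lemma T0_sub: "T0 d \<subseteq> hypercube_edges d"
  unfolding T0_def by (auto simp: edge_iff par_len par_hm)

lemma to0: "length x = d \<Longrightarrow> \<exists>w. wk (T0 d) w \<and> hd w = x \<and> last w = replicate d False \<and> length w = Suc (wt x)"
proof (induction "wt x" arbitrary: x rule: less_induct)
  case less
  show ?case
  proof (cases "True \<in> set x")
    case False
    then show ?thesis using no_true[OF False] wt_zero[OF False] less.prems
      by (intro exI[of _ "[x]"]) simp
  next
    case True
    have "wt (par x) < wt x" using par_wt[OF True] by simp
    then obtain w where w: "wk (T0 d) w" "hd w = par x" "last w = replicate d False" "length w = Suc (wt (par x))"
      using less.hyps[of "par x"] less.prems par_len by metis
    have e: "{x, par x} \<in> T0 d" unfolding T0_def using True less.prems by blast
    have "w \<noteq> []" using w by auto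
    then have "wk (T0 d) (x # w)" using w e by (simp add: wk_Cons)
    then show ?thesis using w \<open>w \<noteq> []\<close> par_wt[OF True]
      by (intro exI[of _ "x#w"]) simp
  qed
qed

lemma path_uv: "length u = d \<Longrightarrow> length v = d \<Longrightarrow>
  \<exists>w. wk (T0 d) w \<and> hd w = u \<and> last w = v \<and> length w = Suc (wt u + wt v)"
proof -
  assume u: "length u = d" and v: "length v = d"
  obtain w1 where w1: "wk (T0 d) w1" "hd w1 = u" "last w1 = replicate d False" "length w1 = Suc (wt u)"
    using to0[OF u] by blast
  obtain w2 where w2: "wk (T0 d) w2" "hd w2 = v" "last w2 = replicate d False" "length w2 = Suc (wt v)"
    using to0[OF v] by blast
  have r: "wk (T0 d) (rev w2)" "hd (rev w2) = replicate d False" "last (rev w2) = v"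
    using w2 wk_rev wk_ne by (auto simp: hd_rev last_rev)
  have "wk (T0 d) (w1 @ tl (rev w2))" using w1 r by (intro wk_join) auto
  moreover have "hd (w1 @ tl (rev w2)) = u" using w1(2) wk_ne[OF w1(1)] by simp
  moreover have "last (w1 @ tl (rev w2)) = v"
  proof (cases "tl (rev w2)")
    case Nil
    then have "rev w2 = [hd (rev w2)]" using r wk_ne by (cases "rev w2") auto
    then have "v = replicate d False" using r by (metis last_ConsL)
    then show ?thesis using Nil w1 by simp
  next
    case (Cons z zs)
    then have "rev w2 = hd (rev w2) # z # zs" using r wk_ne by (cases "rev w2") auto
    then have "last (z#zs) = v" using r(3) by (metis last_ConsR list.distinct(1))
    then show ?thesis using Cons by simp
  qed
  moreover have "length (w1 @ tl (rev w2)) = Suc (wt u + wt v)" using w1 w2 by simp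
  ultimately show ?thesis by blast
qed

lemma T0_acyclic: "acyclic_graph (T0 d)"
  unfolding acyclic_graph_def
proof
  assume "\<exists>xs. is_cycle (T0 d) xs"
  then obtain xs where c: "length xs \<ge> 3" "distinct xs" "is_walk (T0 d) xs" "{last xs, hd xs} \<in> T0 d"
    unfolding is_cycle_def by blast
  define n where "n = length xs"
  define nx where "nx = (\<lambda>j. if Suc j < n then Suc j else 0)"
  have edges: "{xs!j, xs!(nx j)} \<in> T0 d" if "j < n" for j
  proof (cases "Suc j < n")
    case True then show ?thesis using c(3) unfolding is_walk_def nx_def n_def by simp
  next
    case False
    then have "j = n - 1" using that by simp
    have xne: "xs \<noteq> []" using c(1) by auto
    then have "xs!j = last xs" "xs!(nx j) = hd xs" using \<open>j = n - 1\<close> False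
      unfolding n_def nx_def by (auto simp: last_conv_nth hd_conv_nth)
    then show ?thesis using c(4) by simp
  qed
  have ne: "xs \<noteq> []" using c(1) by auto
  define m where "m = Max (wt ` set xs)"
  have "m \<in> wt ` set xs" unfolding m_def using ne by (intro Max_in) auto
  then obtain i where i: "i < n" "wt (xs!i) = m" unfolding n_def by (auto simp: in_set_conv_nth)
  have mx: "wt (xs!j) \<le> wt (xs!i)" if "j < n" for j
  proof -
    have "wt (xs!j) \<le> Max (wt ` set xs)" using that unfolding n_def by (intro Max_ge) auto
    then show ?thesis using i(2) unfolding m_def by simp
  qed
  have nbr: "y = par (xs!i)" if "{xs!i, y} \<in> T0 d" "wt y \<le> wt (xs!i)" for y
    using T0_edge[OF that(1)] par_wt that(2) by fastforce
  define pv where "pv = (if i = 0 then n - 1 else i - 1)"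
  have pvn: "pv < n" "nx pv = i" using i c(1) unfolding pv_def nx_def n_def by auto
  have nxn: "nx i < n" using c(1) unfolding nx_def n_def by auto
  have "xs!(nx i) = par (xs!i)" using nbr edges[OF i(1)] mx[OF nxn] by blast
  moreover have "xs!pv = par (xs!i)"
  proof -
    have "{xs!pv, xs!i} \<in> T0 d" using edges[OF pvn(1)] pvn(2) by simp
    then have "{xs!i, xs!pv} \<in> T0 d" by (simp add: insert_commute)
    then show ?thesis using nbr mx[OF pvn(1)] by blast
  qed
  ultimately have "xs!pv = xs!(nx i)" by simp
  then have "pv = nx i" using c(2) pvn(1) nxn nth_eq_iff_index_eq unfolding n_def by blast
  then show False using c(1) i(1) unfolding pv_def nx_def n_def by (auto split: if_splits)
qed

lemma T0_span: "spanning_tree (hypercube_verts d) (hypercube_edges d) (T0 d)"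
  unfolding spanning_tree_def
proof (intro conjI)
  show "T0 d \<subseteq> hypercube_edges d" by (rule T0_sub)
  show "acyclic_graph (T0 d)" by (rule T0_acyclic)
  show "graph_connected (hypercube_verts d) (T0 d)" unfolding graph_connected_def
  proof (intro ballI)
    fix u v assume "u \<in> hypercube_verts d" "v \<in> hypercube_verts d"
    then obtain w where "wk (T0 d) w" "hd w = u" "last w = v"
      using path_uv[of u d v] by (auto simp: hypercube_verts_def)
    then show "\<exists>xs. is_walk (T0 d) xs \<and> hd xs = u \<and> last xs = v" by (auto simp: is_walk_wk)
  qed
qed

lemma all_true: "wt x = length x \<Longrightarrow> i < length x \<Longrightarrow> x!i"
proof (rule ccontr)
  assume a: "wt x = length x" "i < length x" "\<not> x!i"
  have "x!i = False" using a(3) by simp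
  then have "False \<in> set x" using nth_mem[OF a(2)] by metis
  then have "length (filter id x) < length x" by (rule length_filter_less) simp
  then show False using a(1) unfolding wt_def by simp
qed

lemma upper:
  assumes d: "d \<ge> 1"
  shows "stretch (hypercube_edges d) (T0 d) \<le> 2*d - 1"
  unfolding stretch_def
proof (rule Max.boundedI[OF stretch_fin])
  have "{replicate d False, True # replicate (d-1) False} \<in> hypercube_edges d"
    using d by (cases d) (auto simp: edge_iff hm_self)
  then show "{gdist (T0 d) u v | u v. {u,v} \<in> hypercube_edges d} \<noteq> {}" by blast
next
  fix g assume "g \<in> {gdist (T0 d) u v | u v. {u,v} \<in> hypercube_edges d}"
  then obtain u v where g: "g = gdist (T0 d) u v" and e: "{u,v} \<in> hypercube_edges d" by blast
  have lu: "length u = d" and lv: "length v = d" using e edge_iff by auto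
  obtain w where w: "wk (T0 d) w" "hd w = u" "last w = v" "length w = Suc (wt u + wt v)"
    using path_uv[OF lu lv] by blast
  have "g \<le> wt u + wt v" using gdist_le[OF w(1,2,3)] w(4) g by simp
  moreover have "wt u + wt v \<le> 2*d - 1"
  proof (rule ccontr)
    assume "\<not> ?thesis"
    then have "wt u = d" "wt v = d" using wt_le[of u] wt_le[of v] lu lv by auto
    then have "u = v" using lu lv all_true[of u] all_true[of v]
      by (intro nth_equalityI) auto
    then show False using e edge_neq by blast
  qed
  ultimately show "g \<le> 2*d - 1" by simp
qed

theorem corollary3p3:
  fixes d :: nat
  assumes "d \<ge> 1"
  shows "tree_stretch (hypercube_verts d) (hypercube_edges d) = 2 * d - 1"
proof -
  let ?V = "hypercube_verts d" and ?E = "hypercube_edges d"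
  let ?S = "{stretch ?E T | T. spanning_tree ?V ?E T}"
  have "?E \<subseteq> Pow ?V" unfolding hypercube_edges_def hypercube_verts_def by auto
  then have fE: "finite ?E" using finite_V finite_subset by blast
  have "?S \<subseteq> stretch ?E ` Pow ?E" unfolding spanning_tree_def by blast
  then have fS: "finite ?S" using fE finite_subset by blast
  have inS: "stretch ?E (T0 d) \<in> ?S" using T0_span by blast
  have "Min ?S \<le> 2*d - 1" using Min_le[OF fS inS] upper[OF assms] by simp
  moreover have "2*d - 1 \<le> Min ?S" using fS inS lower[OF _ assms] by (subst Min_ge_iff) auto
  ultimately show ?thesis unfolding tree_stretch_def by simp
qed

end
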